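(* Let $\{\theta_m\}$ satisfy $\theta_1\ge\theta_2\ge\cdots\ge0$, $\theta_m\to0$; $\mathcal B=\mathcal B(\{\theta_m\})$. Let $g\in V$ and suppose there is $b>0$ with $\mathrm{var}_k(g)\le b\theta_k^k$ for all $k\in\mathbb N$. Then (i) $\mathscr L_g(\mathcal B)\subset\mathcal B$; (ii) $K^{(q)}_{g,m}(\mathcal B)\subset\mathcal B$ for all $m,q\in\mathbb N$; (iii) $\mathrm{rank}\,K^{(q)}_{g,m}\le q\,\mathrm{rank}\,E_m$ for all $m,q\in\mathbb N$.
   Context: $\Sigma_{\mathbf A}^+$ is the one-sided Markov shift of an $N\times N$ zero-one aperiodic matrix $\mathbf A$, $\sigma_{\mathbf A}$ the shift. $\mathrm{var}_k(\phi)=\sup\{|\phi(\omega)-\phi(\omega')|:\omega_j=\omega'_j,\ 0\le j\le k-1\}$; $V=\{\phi:\mathrm{var}_k(\phi)^{1/k}\to0\}$. $(\mathscr L_g\phi)(\omega)=\sum_{\sigma_{\mathbf A}\omega'=\omega}e^{g(\omega')}\phi(\omega')$. $\mathcal B(\{\theta_m\})=\{\phi\in V:\exists C\ge0,\ \mathrm{var}_k(\phi)\le C\theta_{k+1}^k\ \forall k\ge0\}$, a Banach space with norm $\|\phi\|_\infty+\inf C$. Fix a Borel probability $\mu$ charging all nonempty open sets; $(E_m\phi)(\omega)=\mu([\omega|m])^{-1}\int_{[\omega|m]}\phi\,d\mu$, $[\omega|m]=\{\xi:\xi_j=\omega_j,0\le j\le m-1\}$. $K_{g,m}=\mathscr L_g\circ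 E_m$ and $K^{(q)}_{g,m}=\mathscr L_g^q-(\mathscr L_g-K_{g,m})^q$. *)

theory Defs
  imports "HOL-Analysis.Analysis" "HOL-Probability.Probability" "HOL-Library.Function_Algebras"
begin

type_synonym seq = "nat \<Rightarrow> nat"

text \<open>The N x N zero-one matrix A is given as a relation on indices {0..<N}:
  A i j holds iff the (i,j) entry equals 1.\<close>

definition aperiodic :: "nat \<Rightarrow> (nat \<Rightarrow> nat \<Rightarrow> bool) \<Rightarrow> bool" where
  "aperiodic N A \<longleftrightarrow> (\<exists>M>0. \<forall>i<N. \<forall>j<N. \<exists>x :: nat \<Rightarrow> nat.
      x 0 = i \<and> x M = j \<and> (\<forall>l\<le>M. x l < N) \<and> (\<forall>l<M. A (x l) (x (Suc l))))"

definition SigmaA :: "nat \<Rightarrow> (nat \<Rightarrow> nat \<Rightarrow> bool) \<Rightarrow> seq set" where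
  "SigmaA N A = {\<omega>. \<forall>j. \<omega> j < N \<and> A (\<omega> j) (\<omega> (Suc j))}"

definition shiftA :: "seq \<Rightarrow> seq" where
  "shiftA \<omega> = (\<lambda>j. \<omega> (Suc j))"

definition var :: "nat \<Rightarrow> (nat \<Rightarrow> nat \<Rightarrow> bool) \<Rightarrow> nat \<Rightarrow> (seq \<Rightarrow> complex) \<Rightarrow> ereal" where
  "var N A k \<phi> = (SUP p \<in> {(\<omega>, \<omega>'). \<omega> \<in> SigmaA N A \<and> \<omega>' \<in> SigmaA N A \<and> (\<forall>j<k. \<omega> j = \<omega>' j)}.
       ereal (cmod (\<phi> (fst p) - \<phi> (snd p))))"

definition inV :: "nat \<Rightarrow> (nat \<Rightarrow> nat \<Rightarrow> bool) \<Rightarrow> (seq \<Rightarrow> complex) \<Rightarrow> bool" where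
  "inV N A \<phi> \<longleftrightarrow> (\<forall>k. var N A k \<phi> < \<infinity>) \<and>
      (\<lambda>k. real_of_ereal (var N A k \<phi>) powr (1 / real k)) \<longlonglongrightarrow> 0"

definition inB :: "nat \<Rightarrow> (nat \<Rightarrow> nat \<Rightarrow> bool) \<Rightarrow> (nat \<Rightarrow> real) \<Rightarrow> (seq \<Rightarrow> complex) \<Rightarrow> bool" where
  "inB N A \<theta> \<phi> \<longleftrightarrow> inV N A \<phi> \<and> (\<exists>C\<ge>0. \<forall>k. var N A k \<phi> \<le> ereal (C * \<theta> (Suc k) ^ k))"

definition cyl :: "nat \<Rightarrow> (nat \<Rightarrow> nat \<Rightarrow> bool) \<Rightarrow> seq \<Rightarrow> nat \<Rightarrow> seq set" where
  "cyl N A \<omega> m = {\<xi> \<in> SigmaA N A. \<forall>j<m. \<xi> j = \<omega> j}"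

definition Eop :: "seq measure \<Rightarrow> nat \<Rightarrow> (nat \<Rightarrow> nat \<Rightarrow> bool) \<Rightarrow> nat \<Rightarrow> (seq \<Rightarrow> complex) \<Rightarrow> seq \<Rightarrow> complex" where
  "Eop \<mu> N A m \<phi> \<omega> = (LINT \<xi>:cyl N A \<omega> m|\<mu>. \<phi> \<xi>) / complex_of_real (measure \<mu> (cyl N A \<omega> m))"

definition Lop :: "nat \<Rightarrow> (nat \<Rightarrow> nat \<Rightarrow> bool) \<Rightarrow> (seq \<Rightarrow> complex) \<Rightarrow> (seq \<Rightarrow> complex) \<Rightarrow> seq \<Rightarrow> complex" where
  "Lop N A g \<phi> \<omega> = (\<Sum>\<omega>' \<in> {\<omega>' \<in> SigmaA N A. shiftA \<omega>' = \<omega>}. exp (g \<omega>') * \<phi> \<omega>')"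

definition Kop :: "seq measure \<Rightarrow> nat \<Rightarrow> (nat \<Rightarrow> nat \<Rightarrow> bool) \<Rightarrow> (seq \<Rightarrow> complex) \<Rightarrow> nat
    \<Rightarrow> (seq \<Rightarrow> complex) \<Rightarrow> seq \<Rightarrow> complex" where
  "Kop \<mu> N A g m = Lop N A g \<circ> Eop \<mu> N A m"

definition Kq :: "seq measure \<Rightarrow> nat \<Rightarrow> (nat \<Rightarrow> nat \<Rightarrow> bool) \<Rightarrow> (seq \<Rightarrow> complex) \<Rightarrow> nat \<Rightarrow> nat
    \<Rightarrow> (seq \<Rightarrow> complex) \<Rightarrow> seq \<Rightarrow> complex" where
  "Kq \<mu> N A g m q = (\<lambda>\<phi> \<omega>. (Lop N A g ^^ q) \<phi> \<omega>
      - ((\<lambda>\<psi> \<omega>'. Lop N A g \<psi> \<omega>' - Kop \<mu> N A g m \<psi> \<omega>') ^^ q) \<phi> \<omega>)"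

text \<open>Complex-linear structure on functions seq => complex; functions are identified
  when they agree on SigmaA (restriction).\<close>

definition fscale :: "complex \<Rightarrow> (seq \<Rightarrow> complex) \<Rightarrow> seq \<Rightarrow> complex" where
  "fscale c f = (\<lambda>x. c * f x)"

definition op_rank :: "nat \<Rightarrow> (nat \<Rightarrow> nat \<Rightarrow> bool) \<Rightarrow> (nat \<Rightarrow> real)
    \<Rightarrow> ((seq \<Rightarrow> complex) \<Rightarrow> (seq \<Rightarrow> complex)) \<Rightarrow> enat" where
  "op_rank N A \<theta> T =
     (let S = (\<lambda>\<phi>. (\<lambda>\<omega>. if \<omega> \<in> SigmaA N A then T \<phi> \<omega> else 0)) ` {\<phi>. inB N A \<theta> \<phi>}
      in if \<exists>F. finite F \<and> S \<subseteq> module.span fscale F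
         then enat (vector_space.dim fscale S) else \<infinity>)"

end

theory Submission
  imports Defs
begin


definition vb :: "nat \<Rightarrow> (nat \<Rightarrow> nat \<Rightarrow> bool) \<Rightarrow> nat \<Rightarrow> (seq \<Rightarrow> complex) \<Rightarrow> real \<Rightarrow> bool" where
  "vb N A k \<phi> c \<longleftrightarrow> (\<forall>\<omega>\<in>SigmaA N A. \<forall>\<omega>'\<in>SigmaA N A. (\<forall>j<k. \<omega> j = \<omega>' j) \<longrightarrow> cmod (\<phi> \<omega> - \<phi> \<omega>') \<le> c)"

lemma var_le_iff: "var N A k \<phi> \<le> ereal c \<longleftrightarrow> vb N A k \<phi> c"
  unfolding var_def vb_def by (auto simp: SUP_le_iff)

lemma var_cases: "var N A k \<phi> = -\<infinity> \<or> var N A k \<phi> \<ge> 0"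
proof (cases "{(\<omega>, \<omega>'). \<omega> \<in> SigmaA N A \<and> \<omega>' \<in> SigmaA N A \<and> (\<forall>j<k. \<omega> j = \<omega>' j)} = {}")
  case True
  have "var N A k \<phi> = (SUP p\<in>{}. ereal (cmod (\<phi> (fst p) - \<phi> (snd p))))"
    unfolding var_def True by (rule refl)
  then show ?thesis by (simp add: bot_ereal_def)
next
  case False
  then obtain p where p: "p \<in> {(\<omega>, \<omega>'). \<omega> \<in> SigmaA N A \<and> \<omega>' \<in> SigmaA N A \<and> (\<forall>j<k. \<omega> j = \<omega>' j)}" by blast
  have "ereal 0 \<le> ereal (cmod (\<phi> (fst p) - \<phi> (snd p)))" by simp
  also have "\<dots> \<le> var N A k \<phi>" unfolding var_def by (rule SUP_upper[OF p])
  finally show ?thesis by (simp add: zero_ereal_def)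
qed

lemma vb_mono: "vb N A k \<phi> c \<Longrightarrow> c \<le> d \<Longrightarrow> vb N A k \<phi> d"
  unfolding vb_def by force

lemma vb_diff: "vb N A k f c \<Longrightarrow> vb N A k h d \<Longrightarrow> vb N A k (\<lambda>x. f x - h x) (c + d)"
  unfolding vb_def
proof (intro ballI impI)
  fix \<omega> \<omega>' assume f: "\<forall>\<omega>\<in>SigmaA N A. \<forall>\<omega>'\<in>SigmaA N A. (\<forall>j<k. \<omega> j = \<omega>' j) \<longrightarrow> cmod (f \<omega> - f \<omega>') \<le> c"
    and h: "\<forall>\<omega>\<in>SigmaA N A. \<forall>\<omega>'\<in>SigmaA N A. (\<forall>j<k. \<omega> j = \<omega>' j) \<longrightarrow> cmod (h \<omega> - h \<omega>') \<le> d"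
    and w: "\<omega> \<in> SigmaA N A" "\<omega>' \<in> SigmaA N A" "\<forall>j<k. \<omega> j = \<omega>' j"
  have "cmod (f \<omega> - h \<omega> - (f \<omega>' - h \<omega>')) \<le> cmod (f \<omega> - f \<omega>') + cmod (h \<omega> - h \<omega>')"
    by (metis (no_types, lifting) add_diff_add diff_add_cancel norm_triangle_ineq4)
  then show "cmod (f \<omega> - h \<omega> - (f \<omega>' - h \<omega>')) \<le> c + d" using f h w by fastforce
qed

lemma theta_le1:
  assumes theta_mono: "\<And>m. m \<ge> 1 \<Longrightarrow> \<theta> (Suc m) \<le> \<theta> m"
  shows "n \<ge> 1 \<Longrightarrow> \<theta> n \<le> (\<theta> 1::real)"
proof (induction n)
  case 0 then show ?case by simp
next
  case (Suc n) then show ?case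
    by (cases "n = 0") (auto intro: order_trans[OF theta_mono])
qed

lemma inB_iff:
  fixes \<theta> :: "nat \<Rightarrow> real"
  assumes theta_nonneg: "\<And>m. m \<ge> 1 \<Longrightarrow> \<theta> m \<ge> 0"
    and theta_lim: "\<theta> \<longlonglongrightarrow> 0"
  shows "inB N A \<theta> \<phi> \<longleftrightarrow> (\<exists>C\<ge>0. \<forall>k. vb N A k \<phi> (C * \<theta> (Suc k) ^ k))"
proof
  assume "inB N A \<theta> \<phi>" then show "\<exists>C\<ge>0. \<forall>k. vb N A k \<phi> (C * \<theta> (Suc k) ^ k)"
    unfolding inB_def var_le_iff by blast
next
  assume "\<exists>C\<ge>0. \<forall>k. vb N A k \<phi> (C * \<theta> (Suc k) ^ k)"
  then obtain C where C: "C \<ge> 0" "\<And>k. vb N A k \<phi> (C * \<theta> (Suc k) ^ k)" by blast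
  have vle: "var N A k \<phi> \<le> ereal (C * \<theta> (Suc k) ^ k)" for k using C var_le_iff by blast
  define D where "D = max C 1"
  have D: "D > 0" "C \<le> D" unfolding D_def by auto
  have rv: "0 \<le> real_of_ereal (var N A k \<phi>) \<and> real_of_ereal (var N A k \<phi>) \<le> C * \<theta> (Suc k) ^ k" for k
  proof -
    have nn: "0 \<le> C * \<theta> (Suc k) ^ k" using C theta_nonneg[of "Suc k"] by simp
    from var_cases[of N A k \<phi>] show ?thesis
    proof
      assume "var N A k \<phi> = -\<infinity>" then show ?thesis using nn by simp
    next
      assume h: "var N A k \<phi> \<ge> 0"
      then obtain r where "var N A k \<phi> = ereal r" using vle[of k]
        by (cases "var N A k \<phi>") auto
      then show ?thesis using h vle[of k] by simp
    qed
  qed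
  have fin: "var N A k \<phi> < \<infinity>" for k by (rule le_less_trans[OF vle]) simp
  have bound: "real_of_ereal (var N A k \<phi>) powr (1 / real k) \<le> D powr (1 / real k) * \<theta> (Suc k)"
    if "k \<ge> 1" for k
  proof -
    let ?v = "real_of_ereal (var N A k \<phi>)"
    have t0: "\<theta> (Suc k) \<ge> 0" using theta_nonneg by simp
    show ?thesis
    proof (cases "?v = 0")
      case True then show ?thesis using t0 D by simp
    next
      case False
      then have vpos: "?v > 0" using rv[of k] by simp
      have tpos: "\<theta> (Suc k) > 0"
      proof (rule ccontr)
        assume "\<not> \<theta> (Suc k) > 0"
        then have "\<theta> (Suc k) = 0" using t0 by simp
        then have "C * \<theta> (Suc k) ^ k = 0" using that by simp
        then show False using rv[of k] vpos by linarith
      qed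
      have "?v powr (1/real k) \<le> (D * \<theta> (Suc k) ^ k) powr (1/real k)"
      proof (rule powr_mono2)
        have "C * \<theta> (Suc k) ^ k \<le> D * \<theta> (Suc k) ^ k"
          using D tpos by (intro mult_right_mono) auto
        then show "?v \<le> D * \<theta> (Suc k) ^ k" using rv[of k] by linarith
      qed (use vpos in auto)
      also have "\<dots> = D powr (1/real k) * (\<theta> (Suc k) ^ k) powr (1/real k)"
        using D tpos by (simp add: powr_mult)
      also have "(\<theta> (Suc k) ^ k) powr (1/real k) = \<theta> (Suc k)"
      proof -
        have "\<theta> (Suc k) ^ k = \<theta> (Suc k) powr (real k)" using tpos by (simp add: powr_realpow)
        then have "(\<theta> (Suc k) ^ k) powr (1/real k) = \<theta> (Suc k) powr (real k * (1/real k))"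
          by (simp add: powr_powr)
        also have "\<dots> = \<theta> (Suc k)" using that tpos by simp
        finally show ?thesis .
      qed
      finally show ?thesis by simp
    qed
  qed
  have lim: "(\<lambda>k. D powr (1 / real k) * \<theta> (Suc k)) \<longlonglongrightarrow> D powr 0 * 0"
  proof (rule tendsto_mult)
    show "(\<lambda>k. D powr (1 / real k)) \<longlonglongrightarrow> D powr 0"
      using tendsto_powr[OF tendsto_const lim_1_over_n, of D] D by simp
    show "(\<lambda>k. \<theta> (Suc k)) \<longlonglongrightarrow> 0" using LIMSEQ_Suc[OF theta_lim] .
  qed
  have "(\<lambda>k. real_of_ereal (var N A k \<phi>) powr (1 / real k)) \<longlonglongrightarrow> 0"
  proof (rule tendsto_sandwich[OF _ _ tendsto_const])
    show "\<forall>\<^sub>F n in sequentially. 0 \<le> real_of_ereal (var N A n \<phi>) powr (1 / real n)" by simp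
    show "\<forall>\<^sub>F n in sequentially. real_of_ereal (var N A n \<phi>) powr (1 / real n) \<le> D powr (1 / real n) * \<theta> (Suc n)"
      using bound eventually_sequentially by blast
    show "(\<lambda>k. D powr (1 / real k) * \<theta> (Suc k)) \<longlonglongrightarrow> 0" using lim by simp
  qed
  then show "inB N A \<theta> \<phi>" unfolding inB_def inV_def using fin vle C by blast
qed



definition pre :: "nat \<Rightarrow> seq \<Rightarrow> seq" where
  "pre i \<omega> = (\<lambda>j. case j of 0 \<Rightarrow> i | Suc j \<Rightarrow> \<omega> j)"

lemma pre_0 [simp]: "pre i \<omega> 0 = i" and pre_Suc [simp]: "pre i \<omega> (Suc j) = \<omega> j"
  by (simp_all add: pre_def)

lemma pre_in: "\<omega> \<in> SigmaA N A \<Longrightarrow> i < N \<Longrightarrow> A i (\<omega> 0) \<Longrightarrow> pre i \<omega> \<in> SigmaA N A"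
  unfolding SigmaA_def by (auto split: nat.split simp: pre_def)

lemma pre_set:
  assumes "\<omega> \<in> SigmaA N A"
  shows "{\<omega>' \<in> SigmaA N A. shiftA \<omega>' = \<omega>} = (\<lambda>i. pre i \<omega>) ` {i. i < N \<and> A i (\<omega> 0)}"
proof
  show "{\<omega>' \<in> SigmaA N A. shiftA \<omega>' = \<omega>} \<subseteq> (\<lambda>i. pre i \<omega>) ` {i. i < N \<and> A i (\<omega> 0)}"
  proof
    fix \<omega>' assume h: "\<omega>' \<in> {\<omega>' \<in> SigmaA N A. shiftA \<omega>' = \<omega>}"
    then have e: "\<omega>' = pre (\<omega>' 0) \<omega>"
      by (auto simp: fun_eq_iff shiftA_def pre_def split: nat.split)
    have "\<omega>' 0 < N" "A (\<omega>' 0) (\<omega>' (Suc 0))" using h unfolding SigmaA_def by auto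
    moreover have "\<omega>' (Suc 0) = \<omega> 0" using h by (auto simp: shiftA_def)
    ultimately show "\<omega>' \<in> (\<lambda>i. pre i \<omega>) ` {i. i < N \<and> A i (\<omega> 0)}"
      using e by (intro image_eqI[of _ _ "\<omega>' 0"]) auto
  qed
  show "(\<lambda>i. pre i \<omega>) ` {i. i < N \<and> A i (\<omega> 0)} \<subseteq> {\<omega>' \<in> SigmaA N A. shiftA \<omega>' = \<omega>}"
    using assms pre_in by (auto simp: shiftA_def fun_eq_iff)
qed

lemma Lop_eq:
  assumes "\<omega> \<in> SigmaA N A"
  shows "Lop N A g f \<omega> = (\<Sum>i\<in>{i. i < N \<and> A i (\<omega> 0)}. exp (g (pre i \<omega>)) * f (pre i \<omega>))"
proof -
  have inj: "inj_on (\<lambda>i. pre i \<omega>) {i. i < N \<and> A i (\<omega> 0)}"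
    by (rule inj_onI) (metis pre_0)
  show ?thesis unfolding Lop_def pre_set[OF assms] sum.reindex[OF inj] by simp
qed

lemma exp_lip:
  fixes a b :: complex
  assumes "Re a \<le> G" "Re b \<le> G"
  shows "cmod (exp a - exp b) \<le> exp G * cmod (a - b)"
proof (rule field_differentiable_bound[OF convex_halfspace_Re_le[of G]])
  show "(exp has_field_derivative exp z) (at z within {x. Re x \<le> G})" for z
    by (rule DERIV_subset[OF DERIV_exp]) simp
  show "norm (exp z) \<le> exp G" if "z \<in> {x. Re x \<le> G}" for z using that by simp
qed (use assms in auto)

lemma vb_bounded:
  assumes "vb N A 0 \<phi> c"
  shows "\<exists>M\<ge>0. \<forall>\<omega>\<in>SigmaA N A. cmod (\<phi> \<omega>) \<le> M"
proof (cases "SigmaA N A = {}")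
  case True then show ?thesis by auto
next
  case False
  then obtain \<omega>0 where w0: "\<omega>0 \<in> SigmaA N A" by blast
  have "cmod (\<phi> \<omega>) \<le> cmod (\<phi> \<omega>0) + \<bar>c\<bar>" if "\<omega> \<in> SigmaA N A" for \<omega>
  proof -
    have "cmod (\<phi> \<omega> - \<phi> \<omega>0) \<le> c" using assms that w0 unfolding vb_def by auto
    moreover have "cmod (\<phi> \<omega>) \<le> cmod (\<phi> \<omega>0) + cmod (\<phi> \<omega> - \<phi> \<omega>0)"
      by (metis add.commute diff_add_cancel norm_triangle_ineq)
    ultimately show ?thesis by linarith
  qed
  then show ?thesis by (intro exI[of _ "cmod (\<phi> \<omega>0) + \<bar>c\<bar>"]) auto
qed



lemma theta_pow1:
  fixes \<theta> :: "nat \<Rightarrow> real"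
  assumes theta_mono: "\<And>m. m \<ge> 1 \<Longrightarrow> \<theta> (Suc m) \<le> \<theta> m"
    and theta_nonneg: "\<And>m. m \<ge> 1 \<Longrightarrow> \<theta> m \<ge> 0"
  shows "\<theta> (Suc k) ^ Suc k \<le> \<theta> 1 * \<theta> (Suc k) ^ k"
    and "\<theta> (Suc (Suc k)) ^ Suc k \<le> \<theta> 1 * \<theta> (Suc k) ^ k"
proof -
  have t: "\<theta> (Suc k) \<le> \<theta> 1" using theta_le1[of \<theta>, OF theta_mono] by simp
  have n: "\<theta> (Suc k) ^ k \<ge> 0" using theta_nonneg by simp
  show a: "\<theta> (Suc k) ^ Suc k \<le> \<theta> 1 * \<theta> (Suc k) ^ k"
    using mult_right_mono[OF t n] by simp
  have "\<theta> (Suc (Suc k)) ^ Suc k \<le> \<theta> (Suc k) ^ Suc k"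
    using theta_mono[of "Suc k"] theta_nonneg[of "Suc (Suc k)"] by (intro power_mono) auto
  then show "\<theta> (Suc (Suc k)) ^ Suc k \<le> \<theta> 1 * \<theta> (Suc k) ^ k" using a by linarith
qed

lemma card_I_le: "card {i. i < N \<and> A i x} \<le> N"
proof -
  have "card {i. i < N \<and> A i x} \<le> card {..<N}" by (rule card_mono) auto
  then show ?thesis by simp
qed

lemma Lop_B:
  fixes \<theta> :: "nat \<Rightarrow> real"
  assumes theta_mono: "\<And>m. m \<ge> 1 \<Longrightarrow> \<theta> (Suc m) \<le> \<theta> m"
    and theta_nonneg: "\<And>m. m \<ge> 1 \<Longrightarrow> \<theta> m \<ge> 0"
    and gRe: "\<And>\<omega>. \<omega> \<in> SigmaA N A \<Longrightarrow> Re (g \<omega>) \<le> Gm"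
    and gvar: "\<And>k. k \<ge> 1 \<Longrightarrow> vb N A k g (b * \<theta> k ^ k)"
    and b: "b \<ge> 0"
    and C: "C \<ge> 0" "\<And>k. vb N A k \<phi> (C * \<theta> (Suc k) ^ k)"
  shows "\<exists>C'\<ge>0. \<forall>k. vb N A k (Lop N A g \<phi>) (C' * \<theta> (Suc k) ^ k)"
proof -
  have "vb N A 0 \<phi> C" using C(2)[of 0] by simp
  then obtain M where M: "M \<ge> 0" "\<And>\<omega>. \<omega> \<in> SigmaA N A \<Longrightarrow> cmod (\<phi> \<omega>) \<le> M"
    using vb_bounded[of N A \<phi> C] by blast
  define EG where "EG = exp Gm"
  have EG: "EG > 0" unfolding EG_def by simp
  have t1: "\<theta> 1 \<ge> 0" using theta_nonneg by simp
  let ?I = "\<lambda>\<omega>. {i. i < N \<and> A i (\<omega> 0)}"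
  have eb: "cmod (exp (g x)) \<le> EG" if "x \<in> SigmaA N A" for x
    using gRe[OF that] unfolding EG_def by simp
  have Lb: "cmod (Lop N A g \<phi> \<omega>) \<le> N * (EG * M)" if w: "\<omega> \<in> SigmaA N A" for \<omega>
  proof -
    have "cmod (Lop N A g \<phi> \<omega>) \<le> (\<Sum>i\<in>?I \<omega>. EG * M)"
      unfolding Lop_eq[OF w]
    proof (rule sum_norm_le)
      fix i assume "i \<in> ?I \<omega>"
      then have x: "pre i \<omega> \<in> SigmaA N A" using pre_in w by auto
      show "cmod (exp (g (pre i \<omega>)) * \<phi> (pre i \<omega>)) \<le> EG * M"
        unfolding norm_mult using eb[OF x] M(2)[OF x] EG M(1)
        by (intro mult_mono) auto
    qed
    also have "\<dots> = card (?I \<omega>) * (EG * M)" by simp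
    also have "\<dots> \<le> N * (EG * M)" using card_I_le EG M(1)
      by (intro mult_right_mono) auto
    finally show ?thesis .
  qed
  define T where "T = EG * C * \<theta> 1 + M * EG * b * \<theta> 1"
  have T: "T \<ge> 0" unfolding T_def using EG C M b t1 by simp
  define C' where "C' = 2 * N * (EG * M) + N * T"
  have C'0: "C' \<ge> 0" unfolding C'_def using EG M T by simp
  have "vb N A k (Lop N A g \<phi>) (C' * \<theta> (Suc k) ^ k)" for k
  proof (cases k)
    case 0
    show ?thesis unfolding vb_def 0
    proof (intro ballI impI)
      fix \<omega> \<omega>' assume w: "\<omega> \<in> SigmaA N A" "\<omega>' \<in> SigmaA N A"
      have "cmod (Lop N A g \<phi> \<omega> - Lop N A g \<phi> \<omega>') \<le> cmod (Lop N A g \<phi> \<omega>) + cmod (Lop N A g \<phi> \<omega>')"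
        by (rule norm_triangle_ineq4)
      also have "\<dots> \<le> 2 * N * (EG * M)" using Lb[OF w(1)] Lb[OF w(2)] by simp
      also have "\<dots> \<le> C' * \<theta> (Suc 0) ^ 0" unfolding C'_def using T by simp
      finally show "cmod (Lop N A g \<phi> \<omega> - Lop N A g \<phi> \<omega>') \<le> C' * \<theta> (Suc 0) ^ 0" .
    qed
  next
    case (Suc k0)
    show ?thesis unfolding vb_def
    proof (intro ballI impI)
      fix \<omega> \<omega>' assume w: "\<omega> \<in> SigmaA N A" "\<omega>' \<in> SigmaA N A" and ag: "\<forall>j<k. \<omega> j = \<omega>' j"
      have e0: "\<omega>' 0 = \<omega> 0" using ag Suc by auto
      have tk: "\<theta> (Suc k) ^ k \<ge> 0" using theta_nonneg by simp
      have tm: "cmod (exp (g (pre i \<omega>)) * \<phi> (pre i \<omega>) - exp (g (pre i \<omega>')) * \<phi> (pre i \<omega>'))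
                   \<le> T * \<theta> (Suc k) ^ k" if i: "i \<in> ?I \<omega>" for i
      proof -
        let ?x = "pre i \<omega>" and ?y = "pre i \<omega>'"
        have x: "?x \<in> SigmaA N A" and y: "?y \<in> SigmaA N A" using pre_in w i e0 by auto
        have agx: "\<forall>j<Suc k. ?x j = ?y j" using ag by (auto simp: less_Suc_eq_0_disj)
        have d1: "cmod (\<phi> ?x - \<phi> ?y) \<le> C * \<theta> (Suc (Suc k)) ^ Suc k"
          using C(2)[of "Suc k"] x y agx unfolding vb_def by blast
        have d2: "cmod (g ?x - g ?y) \<le> b * \<theta> (Suc k) ^ Suc k"
          using gvar[of "Suc k"] x y agx unfolding vb_def by auto
        have d3: "cmod (exp (g ?x) - exp (g ?y)) \<le> EG * cmod (g ?x - g ?y)"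
          unfolding EG_def by (rule exp_lip) (use gRe x y in auto)
        have eq: "exp (g ?x) * \<phi> ?x - exp (g ?y) * \<phi> ?y
                  = exp (g ?x) * (\<phi> ?x - \<phi> ?y) + \<phi> ?y * (exp (g ?x) - exp (g ?y))"
          by (simp add: algebra_simps)
        have "cmod (exp (g ?x) * \<phi> ?x - exp (g ?y) * \<phi> ?y)
              \<le> cmod (exp (g ?x)) * cmod (\<phi> ?x - \<phi> ?y) + cmod (\<phi> ?y) * cmod (exp (g ?x) - exp (g ?y))"
          unfolding eq using norm_triangle_ineq[of "exp (g ?x) * (\<phi> ?x - \<phi> ?y)" "\<phi> ?y * (exp (g ?x) - exp (g ?y))"]
          by (simp only: norm_mult)
        also have "\<dots> \<le> EG * (C * \<theta> (Suc (Suc k)) ^ Suc k) + M * (EG * (b * \<theta> (Suc k) ^ Suc k))"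
        proof (rule add_mono)
          show "cmod (exp (g ?x)) * cmod (\<phi> ?x - \<phi> ?y) \<le> EG * (C * \<theta> (Suc (Suc k)) ^ Suc k)"
            by (rule mult_mono[OF eb[OF x] d1]) (use EG in auto)
          have "cmod (exp (g ?x) - exp (g ?y)) \<le> EG * (b * \<theta> (Suc k) ^ Suc k)"
            using d3 mult_left_mono[OF d2, of EG] EG by linarith
          then show "cmod (\<phi> ?y) * cmod (exp (g ?x) - exp (g ?y)) \<le> M * (EG * (b * \<theta> (Suc k) ^ Suc k))"
            by (rule mult_mono[OF M(2)[OF y]]) (use M in auto)
        qed
        also have "\<dots> \<le> EG * (C * (\<theta> 1 * \<theta> (Suc k) ^ k)) + M * (EG * (b * (\<theta> 1 * \<theta> (Suc k) ^ k)))"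
          using theta_pow1[of \<theta>, OF theta_mono theta_nonneg, of k] EG C M b
          by (intro add_mono mult_left_mono) auto
        also have "\<dots> = T * \<theta> (Suc k) ^ k" unfolding T_def by (simp add: algebra_simps)
        finally show ?thesis .
      qed
      have eqD: "Lop N A g \<phi> \<omega> - Lop N A g \<phi> \<omega>' =
            (\<Sum>i\<in>?I \<omega>. exp (g (pre i \<omega>)) * \<phi> (pre i \<omega>) - exp (g (pre i \<omega>')) * \<phi> (pre i \<omega>'))"
        unfolding Lop_eq[OF w(1)] Lop_eq[OF w(2)] e0 by (rule sum_subtractf[symmetric])
      have NT: "N * T \<le> C'" unfolding C'_def using EG M by simp
      have "cmod (Lop N A g \<phi> \<omega> - Lop N A g \<phi> \<omega>') \<le> (\<Sum>i\<in>?I \<omega>. T * \<theta> (Suc k) ^ k)"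
        unfolding eqD by (rule sum_norm_le) (rule tm)
      also have "\<dots> = card (?I \<omega>) * (T * \<theta> (Suc k) ^ k)" by simp
      also have "\<dots> \<le> N * (T * \<theta> (Suc k) ^ k)"
        using card_I_le T tk by (intro mult_right_mono) auto
      also have "\<dots> = (N * T) * \<theta> (Suc k) ^ k" by simp
      also have "\<dots> \<le> C' * \<theta> (Suc k) ^ k"
        using NT tk by (rule mult_right_mono)
      finally show "cmod (Lop N A g \<phi> \<omega> - Lop N A g \<phi> \<omega>') \<le> C' * \<theta> (Suc k) ^ k" .
    qed
  qed
  then show ?thesis using C'0 by blast
qed



lemma cyl_open: "open {\<xi>::seq. \<forall>j<m. \<xi> j = x j}"
proof -
  have e: "{\<xi>::seq. \<forall>j<m. \<xi> j = x j} = (\<Inter>j\<in>{..<m}. (\<lambda>\<xi>::seq. \<xi> j) -` {x j})" by auto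
  have "open ((\<lambda>\<xi>::seq. \<xi> j) -` {x j})" for j
  proof -
    have "continuous_on UNIV (\<lambda>\<xi>::seq. \<xi> j)" by simp
    then have "\<forall>B. open B \<longrightarrow> open ((\<lambda>\<xi>::seq. \<xi> j) -` B \<inter> UNIV)"
      using continuous_on_open_vimage[OF open_UNIV] by blast
    moreover have "open {x j}" by (rule discrete_topology_class.open_discrete)
    ultimately show ?thesis by simp
  qed
  then show ?thesis unfolding e by (intro open_INT) auto
qed

lemma cyl_eq: "cyl N A x m = SigmaA N A \<inter> {\<xi>::seq. \<forall>j<m. \<xi> j = x j}"
  by (auto simp: cyl_def)

lemma Eop_close:
  fixes \<mu> :: "seq measure"
  assumes mu_prob: "prob_space \<mu>"
    and mu_space: "space \<mu> = SigmaA N A"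
    and mu_sets: "sets \<mu> = sets (restrict_space borel (SigmaA N A))"
    and mu_open: "\<And>U. openin (top_of_set (SigmaA N A)) U \<Longrightarrow> U \<noteq> {} \<Longrightarrow> emeasure \<mu> U > 0"
    and cont: "continuous_on (SigmaA N A) \<phi>"
    and bnd: "\<And>x. x \<in> SigmaA N A \<Longrightarrow> cmod (\<phi> x) \<le> M"
    and w: "\<omega> \<in> SigmaA N A"
    and cl: "\<And>\<xi>. \<xi> \<in> cyl N A \<omega> m \<Longrightarrow> cmod (\<phi> \<xi> - \<phi> \<omega>) \<le> c"
  shows "cmod (Eop \<mu> N A m \<phi> \<omega> - \<phi> \<omega>) \<le> c"
proof -
  interpret prob_space \<mu> by (rule mu_prob)
  let ?C = "cyl N A \<omega> m"
  have CS: "?C \<in> sets \<mu>"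
    unfolding mu_sets sets_restrict_space cyl_eq
    by (rule image_eqI[OF refl]) (rule borel_open[OF cyl_open])
  have wC: "\<omega> \<in> ?C" using w by (auto simp: cyl_def)
  have "openin (top_of_set (SigmaA N A)) ?C"
    unfolding openin_open cyl_eq by (rule exI[of _ "{\<xi>::seq. \<forall>j<m. \<xi> j = \<omega> j}"]) (simp add: cyl_open)
  then have Cpos: "emeasure \<mu> ?C > 0" using wC by (intro mu_open) auto
  have mpos: "measure \<mu> ?C > 0"
    using Cpos emeasure_eq_measure[of ?C] by simp
  have meas: "\<phi> \<in> borel_measurable \<mu>"
    unfolding measurable_cong_sets[OF mu_sets refl, of borel]
    by (rule borel_measurable_continuous_on_restrict[OF cont])
  have integ: "integrable \<mu> \<phi>"
    by (rule integrable_const_bound[where B=M]) (use bnd mu_space meas in \<open>auto intro!: AE_I2\<close>)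
  have si: "set_integrable \<mu> ?C \<phi>"
    unfolding set_integrable_def by (rule integrable_mult_indicator[OF CS integ])
  have sc: "set_integrable \<mu> ?C (\<lambda>_. \<phi> \<omega>)"
    unfolding set_integrable_def by (rule integrable_mult_indicator[OF CS integrable_const])
  have scr: "set_integrable \<mu> ?C (\<lambda>_. c)"
    unfolding set_integrable_def by (rule integrable_mult_indicator[OF CS integrable_const])
  have sd: "set_integrable \<mu> ?C (\<lambda>x. \<phi> x - \<phi> \<omega>)" using set_integral_diff(1)[OF si sc] .
  have fin: "emeasure \<mu> ?C \<noteq> \<infinity>" by simp
  have eqI: "(LINT x:?C|\<mu>. \<phi> x - \<phi> \<omega>) = (LINT x:?C|\<mu>. \<phi> x) - measure \<mu> ?C *\<^sub>R \<phi> \<omega>"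
    using set_integral_diff(2)[OF si sc] set_integral_const[OF CS fin, of "\<phi> \<omega>"] by simp
  have "cmod (LINT x:?C|\<mu>. \<phi> x - \<phi> \<omega>) \<le> (LINT x:?C|\<mu>. cmod (\<phi> x - \<phi> \<omega>))"
    by (rule set_integral_norm_bound[OF sd])
  also have "\<dots> \<le> (LINT x:?C|\<mu>. c)"
    by (rule set_integral_mono[OF set_integrable_norm[OF sd] scr]) (rule cl)
  also have "\<dots> = measure \<mu> ?C * c"
    using set_integral_const[OF CS fin, of c] by simp
  finally have b1: "cmod ((LINT x:?C|\<mu>. \<phi> x) - measure \<mu> ?C *\<^sub>R \<phi> \<omega>) \<le> measure \<mu> ?C * c"
    unfolding eqI .
  have "Eop \<mu> N A m \<phi> \<omega> - \<phi> \<omega> = ((LINT x:?C|\<mu>. \<phi> x) - measure \<mu> ?C *\<^sub>R \<phi> \<omega>) / complex_of_real (measure \<mu> ?C)"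
    unfolding Eop_def using mpos by (simp add: field_simps scaleR_conv_of_real)
  then have "cmod (Eop \<mu> N A m \<phi> \<omega> - \<phi> \<omega>) = cmod ((LINT x:?C|\<mu>. \<phi> x) - measure \<mu> ?C *\<^sub>R \<phi> \<omega>) / measure \<mu> ?C"
    using mpos by (simp add: norm_divide)
  also have "\<dots> \<le> c" using b1 mpos by (simp add: divide_le_eq mult.commute)
  finally show ?thesis .
qed



lemma B_cont:
  fixes \<theta> :: "nat \<Rightarrow> real"
  assumes theta_nonneg: "\<And>m. m \<ge> 1 \<Longrightarrow> \<theta> m \<ge> 0"
    and theta_lim: "\<theta> \<longlonglongrightarrow> 0"
    and C: "C \<ge> 0" "\<And>k. vb N A k \<phi> (C * \<theta> (Suc k) ^ k)"
  shows "continuous_on (SigmaA N A) \<phi>"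
  unfolding continuous_on_topological
proof (intro ballI allI impI)
  fix x B assume x: "x \<in> SigmaA N A" and B: "open B" "\<phi> x \<in> B"
  obtain e where e: "e > 0" "ball (\<phi> x) e \<subseteq> B" using B open_contains_ball by blast
  define d where "d = min 1 (e / (C + 1))"
  have d: "d > 0" unfolding d_def using e C by simp
  have "\<forall>\<^sub>F n in sequentially. \<theta> (Suc n) < d"
    using order_tendstoD(2)[OF LIMSEQ_Suc[OF theta_lim] d] .
  then obtain K where K: "\<And>n. n \<ge> K \<Longrightarrow> \<theta> (Suc n) < d" unfolding eventually_sequentially by blast
  define k where "k = max K 1"
  have k: "k \<ge> 1" "\<theta> (Suc k) < d" using K unfolding k_def by auto
  have t0: "\<theta> (Suc k) \<ge> 0" using theta_nonneg by simp
  have "\<theta> (Suc k) ^ k = \<theta> (Suc k) * \<theta> (Suc k) ^ (k - 1)"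
    using k(1) by (metis Suc_diff_1 less_le_trans power_Suc zero_less_one)
  also have "\<dots> \<le> \<theta> (Suc k) * 1"
    using t0 k d_def by (intro mult_left_mono power_le_one) auto
  finally have p: "\<theta> (Suc k) ^ k \<le> \<theta> (Suc k)" by simp
  have "C * \<theta> (Suc k) ^ k \<le> C * d" using p k C by (intro mult_left_mono) auto
  also have "\<dots> \<le> C * (e / (C + 1))" unfolding d_def using C by (intro mult_left_mono) auto
  also have "\<dots> < e" using C e by (simp add: field_simps)
  finally have ce: "C * \<theta> (Suc k) ^ k < e" .
  show "\<exists>U. open U \<and> x \<in> U \<and> (\<forall>y\<in>SigmaA N A. y \<in> U \<longrightarrow> \<phi> y \<in> B)"
  proof (intro exI conjI ballI impI)
    show "open {\<xi>::seq. \<forall>j<k. \<xi> j = x j}" by (rule cyl_open)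
    show "x \<in> {\<xi>::seq. \<forall>j<k. \<xi> j = x j}" by simp
    fix y assume y: "y \<in> SigmaA N A" "y \<in> {\<xi>::seq. \<forall>j<k. \<xi> j = x j}"
    then have "cmod (\<phi> y - \<phi> x) \<le> C * \<theta> (Suc k) ^ k" using C(2)[of k] x unfolding vb_def by auto
    then have "\<phi> y \<in> ball (\<phi> x) e" using ce by (simp add: dist_norm norm_minus_commute)
    then show "\<phi> y \<in> B" using e by blast
  qed
qed

lemma Eop_B:
  fixes \<mu> :: "seq measure" and \<theta> :: "nat \<Rightarrow> real"
  assumes mu_prob: "prob_space \<mu>"
    and mu_space: "space \<mu> = SigmaA N A"
    and mu_sets: "sets \<mu> = sets (restrict_space borel (SigmaA N A))"
    and mu_open: "\<And>U. openin (top_of_set (SigmaA N A)) U \<Longrightarrow> U \<noteq> {} \<Longrightarrow> emeasure \<mu> U > 0"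
    and theta_nonneg: "\<And>m. m \<ge> 1 \<Longrightarrow> \<theta> m \<ge> 0"
    and theta_lim: "\<theta> \<longlonglongrightarrow> 0"
    and C: "C \<ge> 0" "\<And>k. vb N A k \<phi> (C * \<theta> (Suc k) ^ k)"
  shows "vb N A k (Eop \<mu> N A m \<phi>) ((3 * C) * \<theta> (Suc k) ^ k)"
proof -
  have cont: "continuous_on (SigmaA N A) \<phi>" by (rule B_cont[OF theta_nonneg theta_lim C])
  have "vb N A 0 \<phi> C" using C(2)[of 0] by simp
  then obtain M where M: "M \<ge> 0" "\<And>\<omega>. \<omega> \<in> SigmaA N A \<Longrightarrow> cmod (\<phi> \<omega>) \<le> M"
    using vb_bounded[of N A \<phi> C] by blast
  have ck: "C * \<theta> (Suc k) ^ k \<ge> 0" using C theta_nonneg by simp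
  show ?thesis unfolding vb_def
  proof (intro ballI impI)
    fix \<omega> \<omega>' assume w: "\<omega> \<in> SigmaA N A" "\<omega>' \<in> SigmaA N A" and ag: "\<forall>j<k. \<omega> j = \<omega>' j"
    show "cmod (Eop \<mu> N A m \<phi> \<omega> - Eop \<mu> N A m \<phi> \<omega>') \<le> 3 * C * \<theta> (Suc k) ^ k"
    proof (cases "m \<le> k")
      case True
      then have "cyl N A \<omega> m = cyl N A \<omega>' m" using ag by (auto simp: cyl_def)
      then have "Eop \<mu> N A m \<phi> \<omega> = Eop \<mu> N A m \<phi> \<omega>'" by (simp add: Eop_def)
      then show ?thesis using ck by simp
    next
      case False
      have cl: "cmod (Eop \<mu> N A m \<phi> z - \<phi> z) \<le> C * \<theta> (Suc k) ^ k" if z: "z \<in> SigmaA N A" for z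
      proof (rule Eop_close[OF mu_prob mu_space mu_sets mu_open cont M(2) z])
        fix \<xi> assume "\<xi> \<in> cyl N A z m"
        then have "\<xi> \<in> SigmaA N A" "\<forall>j<k. \<xi> j = z j" using False by (auto simp: cyl_def)
        then show "cmod (\<phi> \<xi> - \<phi> z) \<le> C * \<theta> (Suc k) ^ k" using C(2)[of k] z unfolding vb_def by blast
      qed auto
      have d: "cmod (\<phi> \<omega> - \<phi> \<omega>') \<le> C * \<theta> (Suc k) ^ k" using C(2)[of k] w ag unfolding vb_def by blast
      have eq: "Eop \<mu> N A m \<phi> \<omega> - Eop \<mu> N A m \<phi> \<omega>' =
            (Eop \<mu> N A m \<phi> \<omega> - \<phi> \<omega>) + (\<phi> \<omega> - \<phi> \<omega>') - (Eop \<mu> N A m \<phi> \<omega>' - \<phi> \<omega>')" by simp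
      have "cmod (Eop \<mu> N A m \<phi> \<omega> - Eop \<mu> N A m \<phi> \<omega>') \<le> cmod ((Eop \<mu> N A m \<phi> \<omega> - \<phi> \<omega>) + (\<phi> \<omega> - \<phi> \<omega>')) + cmod (Eop \<mu> N A m \<phi> \<omega>' - \<phi> \<omega>')"
        unfolding eq by (rule norm_triangle_ineq4)
      also have "\<dots> \<le> cmod (Eop \<mu> N A m \<phi> \<omega> - \<phi> \<omega>) + cmod (\<phi> \<omega> - \<phi> \<omega>') + cmod (Eop \<mu> N A m \<phi> \<omega>' - \<phi> \<omega>')"
        using norm_triangle_ineq[of "Eop \<mu> N A m \<phi> \<omega> - \<phi> \<omega>" "\<phi> \<omega> - \<phi> \<omega>'"] by linarith
      also have "\<dots> \<le> 3 * C * \<theta> (Suc k) ^ k" using cl[OF w(1)] cl[OF w(2)] d by linarith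
      finally show ?thesis .
    qed
  qed
qed



interpretation fs: vector_space fscale
  by unfold_locales (simp_all add: fscale_def fun_eq_iff algebra_simps)

lemma sum_fun_apply: "(\<Sum>b\<in>B. f b) x = (\<Sum>b\<in>B. f b x)"
proof (cases "finite B")
  case True then show ?thesis by (induction B rule: finite_induct) auto
next
  case False then show ?thesis by simp
qed

definition addsc :: "((seq \<Rightarrow> complex) \<Rightarrow> (seq \<Rightarrow> complex)) \<Rightarrow> bool" where
  "addsc T \<longleftrightarrow> (\<forall>f h. T (f + h) = T f + T h) \<and> (\<forall>c f. T (fscale c f) = fscale c (T f))"

lemma addsc_zero: "addsc T \<Longrightarrow> T 0 = 0"
  unfolding addsc_def by (metis add_cancel_right_right add_0)

lemma addsc_diff: "addsc T \<Longrightarrow> T (f - h) = T f - T h"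
  unfolding addsc_def by (metis diff_add_cancel eq_diff_eq)

lemma addsc_sum: "addsc T \<Longrightarrow> T (\<Sum>b\<in>B. h b) = (\<Sum>b\<in>B. T (h b))"
proof (cases "finite B")
  case True
  assume a: "addsc T"
  from True show ?thesis
  proof (induction B rule: finite_induct)
    case empty then show ?case using addsc_zero[OF a] by (simp only: sum.empty)
  next
    case (insert x F)
    have "T (\<Sum>b\<in>insert x F. h b) = T (h x + (\<Sum>b\<in>F. h b))"
      by (rule arg_cong[where f=T], rule sum.insert[OF insert(1,2)])
    also have "\<dots> = T (h x) + T (\<Sum>b\<in>F. h b)" using a unfolding addsc_def by blast
    also have "\<dots> = T (h x) + (\<Sum>b\<in>F. T (h b))" using insert(3) by (simp only:)
    also have "\<dots> = (\<Sum>b\<in>insert x F. T (h b))" by (rule sum.insert[OF insert(1,2), symmetric])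
    finally show ?case .
  qed
next
  case False
  show "addsc T \<Longrightarrow> ?thesis"
  proof -
    assume "addsc T"
    then have "T 0 = 0" by (rule addsc_zero)
    then show ?thesis using False by (simp only: sum.infinite not_False_eq_True)
  qed
qed

lemma addsc_lincomb: "addsc T \<Longrightarrow> T (\<Sum>b\<in>B. fscale (u b) b) = (\<Sum>b\<in>B. fscale (u b) (T b))"
  using addsc_sum[where T=T and B=B and h="\<lambda>b. fscale (u b) b"] unfolding addsc_def by simp

lemma addsc_comp: "addsc T \<Longrightarrow> addsc U \<Longrightarrow> addsc (\<lambda>f. T (U f))"
  unfolding addsc_def by simp

lemma addsc_funpow: "addsc T \<Longrightarrow> addsc (T ^^ n)"
proof (induction n)
  case 0 then show ?case by (simp add: addsc_def)
next
  case (Suc n) then show ?case using addsc_comp[of T "T ^^ n"] by (simp add: comp_def)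
qed

lemma Lop_addsc: "addsc (Lop N A g)"
  unfolding addsc_def Lop_def fscale_def
  by (simp add: fun_eq_iff distrib_left sum.distrib sum_distrib_left mult.left_commute)

definition Rf :: "nat \<Rightarrow> (nat \<Rightarrow> nat \<Rightarrow> bool) \<Rightarrow> (seq \<Rightarrow> complex) \<Rightarrow> (seq \<Rightarrow> complex)" where
  "Rf N A f = (\<lambda>\<omega>. if \<omega> \<in> SigmaA N A then f \<omega> else 0)"

lemma Rf_addsc: "addsc (Rf N A)"
  unfolding addsc_def Rf_def fscale_def by (simp add: fun_eq_iff)

lemma Lop_Rf: "Lop N A g (Rf N A f) = Lop N A g f"
  unfolding Lop_def Rf_def by (intro ext sum.cong) auto

lemma telescope:
  assumes L: "addsc L" and Y: "Y = (\<lambda>\<psi>. L \<psi> - K \<psi>)"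
  shows "(L ^^ q) \<phi> - (Y ^^ q) \<phi> = (\<Sum>i<q. (L ^^ (q - 1 - i)) (K ((Y ^^ i) \<phi>)))"
proof (induction q)
  case 0 then show ?case by (simp only: funpow_0 diff_self lessThan_0 sum.empty)
next
  case (Suc q)
  have "(L ^^ Suc q) \<phi> - (Y ^^ Suc q) \<phi> = L ((L ^^ q) \<phi>) - (L ((Y ^^ q) \<phi>) - K ((Y ^^ q) \<phi>))"
    unfolding funpow.simps comp_def Y ..
  also have "\<dots> = L ((L ^^ q) \<phi> - (Y ^^ q) \<phi>) + K ((Y ^^ q) \<phi>)"
    by (simp only: addsc_diff[OF L, of "(L ^^ q) \<phi>" "(Y ^^ q) \<phi>"] diff_diff_eq2 diff_add_eq)
  also have "\<dots> = (\<Sum>i<q. L ((L ^^ (q - 1 - i)) (K ((Y ^^ i) \<phi>)))) + K ((Y ^^ q) \<phi>)"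
    unfolding Suc.IH addsc_sum[OF L] ..
  also have "(\<Sum>i<q. L ((L ^^ (q - 1 - i)) (K ((Y ^^ i) \<phi>)))) = (\<Sum>i<q. (L ^^ (Suc q - 1 - i)) (K ((Y ^^ i) \<phi>)))"
  proof (rule sum.cong[OF refl])
    fix i assume "i \<in> {..<q}"
    then have "Suc q - 1 - i = Suc (q - 1 - i)" by auto
    then show "L ((L ^^ (q - 1 - i)) (K ((Y ^^ i) \<phi>))) = (L ^^ (Suc q - 1 - i)) (K ((Y ^^ i) \<phi>))"
      by (simp only: funpow.simps comp_def)
  qed
  also have "K ((Y ^^ q) \<phi>) = (L ^^ (Suc q - 1 - q)) (K ((Y ^^ q) \<phi>))" by simp
  finally show ?case by (simp only: sum.lessThan_Suc)
qed



lemma funpow_pres: "(\<And>x. P x \<Longrightarrow> P (f x)) \<Longrightarrow> P x \<Longrightarrow> P ((f ^^ n) x)"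
  by (induction n) auto

theorem lemma3p5:
  fixes N :: nat and A :: "nat \<Rightarrow> nat \<Rightarrow> bool" and \<mu> :: "seq measure"
    and \<theta> :: "nat \<Rightarrow> real" and g :: "seq \<Rightarrow> complex" and b :: real
  assumes aper: "aperiodic N A"
    and mu_prob: "prob_space \<mu>"
    and mu_space: "space \<mu> = SigmaA N A"
    and mu_sets: "sets \<mu> = sets (restrict_space borel (SigmaA N A))"
    and mu_open: "\<And>U. openin (top_of_set (SigmaA N A)) U \<Longrightarrow> U \<noteq> {} \<Longrightarrow> emeasure \<mu> U > 0"
    and theta_mono: "\<And>m. m \<ge> 1 \<Longrightarrow> \<theta> (Suc m) \<le> \<theta> m"
    and theta_nonneg: "\<And>m. m \<ge> 1 \<Longrightarrow> \<theta> m \<ge> 0"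
    and theta_lim: "\<theta> \<longlonglongrightarrow> 0"
    and gV: "inV N A g"
    and b_pos: "b > 0"
    and g_var: "\<And>k. k \<ge> 1 \<Longrightarrow> var N A k g \<le> ereal (b * \<theta> k ^ k)"
  shows "(\<forall>\<phi>. inB N A \<theta> \<phi> \<longrightarrow> inB N A \<theta> (Lop N A g \<phi>))
    \<and> (\<forall>m q. m \<ge> 1 \<longrightarrow> q \<ge> 1 \<longrightarrow>
          (\<forall>\<phi>. inB N A \<theta> \<phi> \<longrightarrow> inB N A \<theta> (Kq \<mu> N A g m q \<phi>)))
    \<and> (\<forall>m q. m \<ge> 1 \<longrightarrow> q \<ge> 1 \<longrightarrow>
          op_rank N A \<theta> (Kq \<mu> N A g m q) \<le> enat q * op_rank N A \<theta> (Eop \<mu> N A m))"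
proof -
  define Bp where "Bp \<phi> \<longleftrightarrow> (\<exists>C\<ge>0. \<forall>k. vb N A k \<phi> (C * \<theta> (Suc k) ^ k))" for \<phi>
  have inB_Bp: "inB N A \<theta> \<phi> \<longleftrightarrow> Bp \<phi>" for \<phi>
    unfolding Bp_def by (rule inB_iff[OF theta_nonneg theta_lim])
  have gvar: "vb N A k g (b * \<theta> k ^ k)" if "k \<ge> 1" for k
    using g_var[OF that] var_le_iff by blast
  obtain G0 where G0: "var N A 0 g \<le> ereal G0"
  proof (cases "var N A 0 g")
    case (real r) then show ?thesis using that[of r] by simp
  next
    case PInf then show ?thesis using gV unfolding inV_def by auto
  next
    case MInf then show ?thesis using that[of 0] by simp
  qed
  then have "vb N A 0 g G0" using var_le_iff by blast
  then obtain Mg where Mg: "\<And>\<omega>. \<omega> \<in> SigmaA N A \<Longrightarrow> cmod (g \<omega>) \<le> Mg"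
    using vb_bounded[of N A g G0] by blast
  have gRe: "Re (g \<omega>) \<le> Mg" if "\<omega> \<in> SigmaA N A" for \<omega>
    using Mg[OF that] complex_Re_le_cmod[of "g \<omega>"] by linarith
  have LB: "Bp (Lop N A g \<phi>)" if "Bp \<phi>" for \<phi>
  proof -
    obtain C where C: "C \<ge> 0" "\<And>k. vb N A k \<phi> (C * \<theta> (Suc k) ^ k)" using \<open>Bp \<phi>\<close> unfolding Bp_def by blast
    show ?thesis unfolding Bp_def
      by (rule Lop_B[OF theta_mono theta_nonneg gRe gvar _ C]) (use b_pos in auto)
  qed
  have EB: "Bp (Eop \<mu> N A m \<phi>)" if "Bp \<phi>" for \<phi> m
  proof -
    obtain C where C: "C \<ge> 0" "\<And>k. vb N A k \<phi> (C * \<theta> (Suc k) ^ k)" using \<open>Bp \<phi>\<close> unfolding Bp_def by blast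
    have "\<forall>k. vb N A k (Eop \<mu> N A m \<phi>) ((3 * C) * \<theta> (Suc k) ^ k)"
      using Eop_B[OF mu_prob mu_space mu_sets mu_open theta_nonneg theta_lim C] by blast
    then show ?thesis unfolding Bp_def using C(1) by (intro exI[of _ "3 * C"]) simp
  qed
  have DB: "Bp (\<lambda>x. f x - h x)" if "Bp f" "Bp h" for f h
  proof -
    obtain C1 where C1: "C1 \<ge> 0" "\<And>k. vb N A k f (C1 * \<theta> (Suc k) ^ k)" using \<open>Bp f\<close> unfolding Bp_def by blast
    obtain C2 where C2: "C2 \<ge> 0" "\<And>k. vb N A k h (C2 * \<theta> (Suc k) ^ k)" using \<open>Bp h\<close> unfolding Bp_def by blast
    have "vb N A k (\<lambda>x. f x - h x) ((C1 + C2) * \<theta> (Suc k) ^ k)" for k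
      using vb_diff[OF C1(2)[of k] C2(2)[of k]] by (simp add: distrib_right)
    then show ?thesis unfolding Bp_def using C1(1) C2(1) by (intro exI[of _ "C1 + C2"]) simp
  qed
  have KB: "Bp (Kop \<mu> N A g m \<phi>)" if "Bp \<phi>" for \<phi> m
    unfolding Kop_def comp_def by (rule LB[OF EB[OF that]])
  define Y where "Y m = (\<lambda>\<psi> \<omega>'. Lop N A g \<psi> \<omega>' - Kop \<mu> N A g m \<psi> \<omega>')" for m
  have YB: "Bp (Y m \<phi>)" if "Bp \<phi>" for \<phi> m
    unfolding Y_def by (rule DB[OF LB[OF that] KB[OF that]])
  have Kq_eq: "Kq \<mu> N A g m q \<phi> = (\<lambda>\<omega>. (Lop N A g ^^ q) \<phi> \<omega> - (Y m ^^ q) \<phi> \<omega>)" for m q \<phi>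
    unfolding Kq_def Y_def ..
  have KqB: "Bp (Kq \<mu> N A g m q \<phi>)" if "Bp \<phi>" for \<phi> m q
    unfolding Kq_eq
    by (rule DB; rule funpow_pres[where P=Bp]) (use LB YB that in auto)
  have part1: "\<forall>\<phi>. inB N A \<theta> \<phi> \<longrightarrow> inB N A \<theta> (Lop N A g \<phi>)"
    using LB inB_Bp by blast
  have part2: "\<forall>m q. m \<ge> 1 \<longrightarrow> q \<ge> 1 \<longrightarrow> (\<forall>\<phi>. inB N A \<theta> \<phi> \<longrightarrow> inB N A \<theta> (Kq \<mu> N A g m q \<phi>))"
    using KqB inB_Bp by blast
  have part3: "op_rank N A \<theta> (Kq \<mu> N A g m q) \<le> enat q * op_rank N A \<theta> (Eop \<mu> N A m)"
    if q: "q \<ge> 1" for m q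
  proof -
    let ?L = "Lop N A g"
    let ?K = "Kop \<mu> N A g m"
    define Bset where "Bset = {\<phi>. inB N A \<theta> \<phi>}"
    define SE where "SE = (\<lambda>\<phi>. Rf N A (Eop \<mu> N A m \<phi>)) ` Bset"
    define SK where "SK = (\<lambda>\<phi>. Rf N A (Kq \<mu> N A g m q \<phi>)) ` Bset"
    have opE: "op_rank N A \<theta> (Eop \<mu> N A m) =
      (if \<exists>F. finite F \<and> SE \<subseteq> fs.span F then enat (fs.dim SE) else \<infinity>)"
      unfolding op_rank_def Let_def SE_def Bset_def Rf_def ..
    have opK: "op_rank N A \<theta> (Kq \<mu> N A g m q) =
      (if \<exists>F. finite F \<and> SK \<subseteq> fs.span F then enat (fs.dim SK) else \<infinity>)"
      unfolding op_rank_def Let_def SK_def Bset_def Rf_def ..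
    show ?thesis
    proof (cases "\<exists>F. finite F \<and> SE \<subseteq> fs.span F")
      case False
      then have "op_rank N A \<theta> (Eop \<mu> N A m) = \<infinity>" unfolding opE by simp
      then show ?thesis using q by (simp add: imult_is_infinity)
    next
      case True
      then obtain F where F: "finite F" "SE \<subseteq> fs.span F" by blast
      obtain Bs where Bs: "Bs \<subseteq> SE" "fs.independent Bs" "SE \<subseteq> fs.span Bs" "card Bs = fs.dim SE"
        by (rule fs.basis_exists)
      have finBs: "finite Bs"
        using fs.independent_span_bound[OF F(1) Bs(2)] Bs(1) F(2) by blast
      define T where "T i = (\<lambda>f. Rf N A ((?L ^^ (q - i)) f))" for i
      define W where "W = (\<Union>i<q. T i ` Bs)"
      have finW: "finite W" unfolding W_def using finBs by simp
      have cardW: "card W \<le> q * card Bs"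
      proof -
        have "card W \<le> (\<Sum>i<q. card (T i ` Bs))" unfolding W_def by (rule card_UN_le) simp
        also have "\<dots> \<le> (\<Sum>i<q. card Bs)" by (intro sum_mono card_image_le finBs)
        also have "\<dots> = q * card Bs" by simp
        finally show ?thesis .
      qed
      have Taddsc: "addsc (T i)" for i
        unfolding T_def by (rule addsc_comp[OF Rf_addsc addsc_funpow[OF Lop_addsc]])
      have SK_sub: "SK \<subseteq> fs.span W"
      proof
        fix s assume "s \<in> SK"
        then obtain \<phi> where \<phi>: "\<phi> \<in> Bset" and s: "s = Rf N A (Kq \<mu> N A g m q \<phi>)"
          unfolding SK_def by blast
        have Bphi: "Bp \<phi>" using \<phi> inB_Bp unfolding Bset_def by blast
        have Yeq: "Y m = (\<lambda>\<psi>. ?L \<psi> - ?K \<psi>)" unfolding Y_def fun_diff_def ..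
        have "Kq \<mu> N A g m q \<phi> = (?L ^^ q) \<phi> - (Y m ^^ q) \<phi>"
          unfolding Kq_eq fun_diff_def ..
        also have "\<dots> = (\<Sum>i<q. (?L ^^ (q - 1 - i)) (?K ((Y m ^^ i) \<phi>)))"
          by (rule telescope[OF Lop_addsc Yeq])
        finally have s2: "s = (\<Sum>i<q. Rf N A ((?L ^^ (q - 1 - i)) (?K ((Y m ^^ i) \<phi>))))"
          unfolding s by (simp only: addsc_sum[OF Rf_addsc])
        show "s \<in> fs.span W" unfolding s2
        proof (rule fs.span_sum)
          fix i assume i: "i \<in> {..<q}"
          define \<psi> where "\<psi> = (Y m ^^ i) \<phi>"
          have B\<psi>: "Bp \<psi>" unfolding \<psi>_def by (rule funpow_pres[where P=Bp]) (use YB Bphi in auto)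
          define e where "e = Rf N A (Eop \<mu> N A m \<psi>)"
          have eSE: "e \<in> SE" unfolding e_def SE_def Bset_def using B\<psi> inB_Bp by blast
          have "?K \<psi> = ?L e" unfolding e_def Lop_Rf Kop_def comp_def ..
          then have "(?L ^^ (q - 1 - i)) (?K \<psi>) = (?L ^^ Suc (q - 1 - i)) e"
            unfolding funpow_Suc_right comp_def by simp
          also have "Suc (q - 1 - i) = q - i" using i by auto
          finally have eq1: "Rf N A ((?L ^^ (q - 1 - i)) (?K \<psi>)) = T i e" unfolding T_def by simp
          obtain u where u: "e = (\<Sum>v\<in>Bs. fscale (u v) v)"
            using eSE Bs(3) fs.span_finite[OF finBs] by blast
          have "T i e = (\<Sum>v\<in>Bs. fscale (u v) (T i v))"
            unfolding u by (rule addsc_lincomb[OF Taddsc])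
          also have "\<dots> \<in> fs.span W"
          proof (rule fs.span_sum)
            fix v assume "v \<in> Bs"
            then have "T i v \<in> W" unfolding W_def using i by blast
            then show "fscale (u v) (T i v) \<in> fs.span W" by (intro fs.span_scale fs.span_base)
          qed
          finally show "Rf N A ((?L ^^ (q - 1 - i)) (?K ((Y m ^^ i) \<phi>))) \<in> fs.span W"
            using eq1 unfolding \<psi>_def by simp
        qed
      qed
      have "fs.dim SK \<le> card W" by (rule fs.dim_le_card[OF SK_sub finW])
      then have dK: "fs.dim SK \<le> q * fs.dim SE" using cardW Bs(4) by simp
      have "op_rank N A \<theta> (Kq \<mu> N A g m q) = enat (fs.dim SK)"
        unfolding opK using SK_sub finW by auto
      moreover have "op_rank N A \<theta> (Eop \<mu> N A m) = enat (fs.dim SE)"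
        unfolding opE using F by auto
      ultimately show ?thesis using dK by simp
    qed
  qed
  show ?thesis using part1 part2 part3 by blast
qed

end
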